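(* Let $\alpha\in(0,1]$ and let $\lambda, c$ be real constants with $c>0$. Let $(L_B)^{\alpha}$ denote the fractional power of the Bessel operator $L_B=\frac{d^2}{dw^2}+\frac{1}{w}\frac{d}{dw}$, defined for functions $f$ of $w>0$ by $$(L_B)^{\alpha}f(w)=4^{\alpha}w^{-2\alpha}\,I_2^{0,-\alpha}\,I_2^{0,-\alpha}f(w).$$ Then the function $$u_{\alpha}(w)=w^{2\alpha-2}\sum_{k=0}^{\infty}(-1)^k\left(\frac{\lambda}{2^{\alpha}c^{\alpha}}\right)^{2k}\frac{w^{2\alpha k}}{[\Gamma(\alpha k+\alpha)]^2},\qquad w>0,$$ satisfies the fractional Bessel equation $$(L_B)^{\alpha}u_{\alpha}(w)=-\frac{\lambda^2}{c^{2\alpha}}u_{\alpha}(w).$$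
   Context: Erdélyi–Kober operators (McBride's notation): for $m>0$, $\eta\in\mathbb{R}$ and $\alpha>0$, $$I_m^{\eta,\alpha}f(x)=\frac{x^{-m\eta-m\alpha}}{\Gamma(\alpha)}\int_0^x(x^m-u^m)^{\alpha-1}u^{m\eta}f(u)\,d(u^m),$$ and for $\alpha\le 0$ they are defined recursively by $$I_m^{\eta,\alpha}f=(\eta+\alpha+1)I_m^{\eta,\alpha+1}f+\frac{1}{m}I_m^{\eta,\alpha+1}\left(x\frac{d}{dx}f\right).$$ This is McBride's definition of fractional powers of the hyper-Bessel operator $x^{a_1}Dx^{a_2}\cdots x^{a_n}Dx^{a_{n+1}}$, specialized to $n=2$, $a_1=-1$, $a_2=1$, $a_3=0$ (so $m=2$ and both parameters $b_1=b_2=0$). *)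

theory Defs
  imports "HOL-Analysis.Analysis"
begin

text \<open>Erdelyi--Kober operator for alpha > 0 (McBride). The measure d(u^m) is written
  as m * u^(m-1) du.\<close>
definition EK_pos :: "real \<Rightarrow> real \<Rightarrow> real \<Rightarrow> (real \<Rightarrow> real) \<Rightarrow> real \<Rightarrow> real" where
  "EK_pos m \<eta> \<alpha> f x =
     x powr (- m * \<eta> - m * \<alpha>) / Gamma \<alpha> *
     integral {0..x} (\<lambda>u. (x powr m - u powr m) powr (\<alpha> - 1) * u powr (m * \<eta>) * f u
                           * (m * u powr (m - 1)))"

fun EK_iter :: "nat \<Rightarrow> real \<Rightarrow> real \<Rightarrow> real \<Rightarrow> (real \<Rightarrow> real) \<Rightarrow> real \<Rightarrow> real" where
  "EK_iter 0 m \<eta> \<alpha> f = EK_pos m \<eta> \<alpha> f"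
| "EK_iter (Suc n) m \<eta> \<alpha> f =
     (\<lambda>x. (\<eta> + \<alpha> + 1) * EK_iter n m \<eta> (\<alpha> + 1) f x
          + (1 / m) * EK_iter n m \<eta> (\<alpha> + 1) (\<lambda>u. u * deriv f u) x)"

definition EK :: "real \<Rightarrow> real \<Rightarrow> real \<Rightarrow> (real \<Rightarrow> real) \<Rightarrow> real \<Rightarrow> real" where
  "EK m \<eta> \<alpha> f = EK_iter (if \<alpha> > 0 then 0 else nat \<lfloor>- \<alpha>\<rfloor> + 1) m \<eta> \<alpha> f"

definition LB_frac :: "real \<Rightarrow> (real \<Rightarrow> real) \<Rightarrow> real \<Rightarrow> real" where
  "LB_frac \<alpha> f w = 4 powr \<alpha> * w powr (- 2 * \<alpha>) * EK 2 0 (- \<alpha>) (EK 2 0 (- \<alpha>) f) w"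

end

theory Submission
  imports Defs
begin


lemma beta_kernel:
  fixes x \<beta> p :: real
  assumes x: "x > 0" and b: "\<beta> > 0" and p: "p > -2"
  shows "((\<lambda>u. (x powr 2 - u powr 2) powr (\<beta> - 1) * u powr p * (2 * u))
           has_integral (x powr (2*\<beta> + p) * Beta (p/2 + 1) \<beta>)) {0..x}"
proof -
  define F where "F s = s powr (p/2) * (1 - s) powr (\<beta> - 1)" for s :: real
  define B where "B = Beta (p/2 + 1) \<beta>"
  define g where "g u = (u/x)^2" for u :: real
  define g' where "g' u = 2*u/x^2" for u :: real
  define G where "G u = (x powr 2 - u powr 2) powr (\<beta> - 1) * u powr p * (2 * u)" for u :: real
  have 1: "(F has_integral B) {0..1}"
    using has_integral_Beta_real[of "p/2+1" \<beta>] p b by (simp add: F_def[abs_def] B_def)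
  have Bpos: "B \<ge> 0" using has_integral_nonneg[OF 1] by (auto simp: F_def)
  have 2: "(\<integral>\<^sup>+s. ennreal (F s * indicator {0..1} s) \<partial>lborel) = ennreal B"
  proof -
    have "(\<integral>\<^sup>+s. ennreal (F s * indicator {0..1} s) \<partial>lborel) = (\<integral>\<^sup>+s\<in>{0..1}. ennreal (F s) \<partial>lborel)"
      by (intro nn_integral_cong) (auto simp: indicator_def)
    also have "\<dots> = ennreal B"
      by (rule nn_integral_has_integral_lebesgue'[OF _ 1]) (auto simp: F_def)
    finally show ?thesis .
  qed
  have meas: "set_borel_measurable borel {g 0..g x} F"
    unfolding set_borel_measurable_def F_def by measurable
  have 3: "(\<integral>\<^sup>+s. ennreal (F s * indicator {g 0..g x} s) \<partial>lborel) =
           (\<integral>\<^sup>+u. ennreal (F (g u) * g' u * indicator {0..x} u) \<partial>lborel)"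
    by (rule nn_integral_substitution[where g=g and a=0 and b=x, OF meas])
       (use x in \<open>auto simp: g_def[abs_def] g'_def power2_eq_square field_simps intro!: derivative_eq_intros continuous_intros\<close>)
  have gg: "g 0 = 0" "g x = 1" using x by (auto simp: g_def)
  have 4: "(\<integral>\<^sup>+u. ennreal (G u * indicator {0..x} u) \<partial>lborel) =
           (\<integral>\<^sup>+u. ennreal (x powr (2*\<beta> + p)) * ennreal (F (g u) * g' u * indicator {0..x} u) \<partial>lborel)"
  proof -
    have ae: "AE u in lborel. u \<noteq> 0 \<and> u \<noteq> x"
      by (rule AE_I'[of "{0,x}"]) (auto intro: countable_imp_null_set_lborel)
    have pt: "ennreal (G u * indicator {0..x} u) =
          ennreal (x powr (2*\<beta> + p)) * ennreal (F (g u) * g' u * indicator {0..x} u)"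
      if u: "u \<noteq> 0" "u \<noteq> x" for u
    proof (cases "u \<in> {0..x}")
      case False then show ?thesis by simp
    next
      case True
      with u have u0: "0 < u" "u < x" by auto
      define r where "r = u/x"
      have r: "0 < r" "r < 1" using u0 x by (auto simp: r_def field_simps)
      have gu: "g u = r^2" by (simp add: g_def r_def)
      have e1: "x powr 2 - u powr 2 = x^2 * (1 - r^2)"
      proof -
        have "u = r * x" using x by (simp add: r_def)
        then show ?thesis using x u0 by (simp add: powr_numeral power_mult_distrib algebra_simps)
      qed
      have e2: "(r^2) powr (p/2) = u powr p / x powr p"
      proof -
        have "(r^2) powr (p/2) = (r powr 2) powr (p/2)" using r by (simp add: powr_numeral)
        also have "\<dots> = r powr p" by (simp add: powr_powr)
        also have "\<dots> = u powr p / x powr p" using u0 x by (simp add: r_def powr_divide)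
        finally show ?thesis .
      qed
      have pos: "0 < 1 - r^2" using r by (simp add: power_less_one_iff abs_less_iff) 
      have e3: "(x^2 * (1 - r^2)) powr (\<beta> - 1) = x powr (2*\<beta> - 2) * (1 - r^2) powr (\<beta> - 1)"
      proof -
        have "(x^2 * (1 - r^2)) powr (\<beta> - 1) = (x^2) powr (\<beta> - 1) * (1 - r^2) powr (\<beta> - 1)"
          using x pos by (simp add: powr_mult)
        also have "(x^2) powr (\<beta> - 1) = x powr (2*\<beta> - 2)"
        proof -
          have "x^2 = x powr 2" using x by (simp add: powr_numeral)
          then have "(x^2) powr (\<beta> - 1) = x powr (2 * (\<beta> - 1))" by (simp add: powr_powr)
          then show ?thesis by (simp add: right_diff_distrib)
        qed
        finally show ?thesis .
      qed
      have e4: "x powr (2*\<beta> + p) = x powr (2*\<beta> - 2) * x powr p * x^2"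
      proof -
        have "2*\<beta> + p = (2*\<beta> - 2) + p + 2" by simp
        then have "x powr (2*\<beta> + p) = x powr (2*\<beta> - 2) * x powr p * x powr 2"
          by (metis powr_add)
        then show ?thesis using x by (simp add: powr_numeral)
      qed
      have xp: "x powr p > 0" using x by simp
      have "G u = x powr (2*\<beta> - 2) * (1 - r^2) powr (\<beta> - 1) * u powr p * (2*u)"
        unfolding G_def e1 e3 by simp
      also have "\<dots> = x powr (2*\<beta> + p) * (F (g u) * g' u)"
        unfolding F_def gu e2 e4 g'_def using x xp by (simp add: field_simps)
      finally have "G u = x powr (2*\<beta> + p) * (F (g u) * g' u)" .
      moreover have "G u \<ge> 0" using u0 x unfolding G_def by simp
      ultimately show ?thesis using True
        by (simp add: ennreal_mult'[symmetric])
    qed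
    show ?thesis using ae by (rule AE_mp[THEN nn_integral_cong_AE]) (use pt in auto)
  qed
  also have "\<dots> = ennreal (x powr (2*\<beta> + p)) * ennreal B"
  proof -
    have m: "(\<lambda>u. ennreal (F (g u) * g' u * indicat_real {0..x} u)) \<in> borel_measurable lborel"
      unfolding F_def g_def g'_def by measurable
    show ?thesis by (subst nn_integral_cmult[OF m]) (metis 2 3 gg)
  qed
  also have "\<dots> = ennreal (x powr (2*\<beta> + p) * B)"
    by (simp add: ennreal_mult')
  finally have 5: "(\<integral>\<^sup>+u. ennreal (G u * indicator {0..x} u) \<partial>lborel) = ennreal (x powr (2*\<beta> + p) * B)" .
  have "((\<lambda>u. G u * indicator {0..x} u) has_integral (x powr (2*\<beta> + p) * B)) UNIV"
  proof (rule nn_integral_has_integral[OF _ _ 5])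
    show "(\<lambda>u. G u * indicator {0..x} u) \<in> borel_measurable borel"
      unfolding G_def by measurable
    fix u show "0 \<le> G u * indicator {0..x} u"
      by (auto simp: G_def indicator_def powr_numeral intro!: mult_nonneg_nonneg power_mono)
  next
    show "0 \<le> x powr (2*\<beta> + p) * B" using Bpos by simp
  qed
  then have "((\<lambda>u. if u \<in> {0..x} then G u else 0) has_integral (x powr (2*\<beta> + p) * B)) UNIV"
    by (rule has_integral_eq[rotated]) (simp add: indicator_def)
  then show ?thesis unfolding has_integral_restrict_UNIV G_def B_def .
qed



definition AS :: "(nat \<Rightarrow> real) \<Rightarrow> bool" where
  "AS c \<longleftrightarrow> (\<forall>y. summable (\<lambda>k. c k * y ^ k))"

lemma AS_abs:
  assumes "AS c" "y \<ge> 0"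
  shows "summable (\<lambda>k. \<bar>c k\<bar> * y ^ k)"
proof -
  have "summable (\<lambda>k. c k * (y+1) ^ k)" using assms by (simp add: AS_def)
  from powser_insidea[OF this, of y] assms
  show ?thesis by (simp add: abs_mult power_abs)
qed

lemma EK_pos_series:
  fixes s \<beta> q x :: real and c :: "nat \<Rightarrow> real"
  assumes s: "s > 0" and b: "\<beta> > 0" and q: "q > -2" and x: "x > 0" and c: "AS c"
    and H: "\<And>u. u > 0 \<Longrightarrow> (\<lambda>k. c k * u powr (q + 2 * s * real k)) sums f u"
  shows "(\<lambda>k. c k * Gamma (1 + q/2 + s * real k) * rGamma (1 + \<beta> + q/2 + s * real k)
              * x powr (q + 2 * s * real k)) sums EK_pos 2 0 \<beta> f x"
proof -
  define J0 where "J0 u = (x powr 2 - u powr 2) powr (\<beta> - 1) * u powr q * (2 * u)" for u :: real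
  define J where "J k u = (x powr 2 - u powr 2) powr (\<beta> - 1) * u powr (q + 2 * s * real k) * (2 * u)"
    for k :: nat and u :: real
  define I where "I k = x powr (2*\<beta> + (q + 2 * s * real k)) * Beta ((q + 2 * s * real k)/2 + 1) \<beta>" for k :: nat
  define X where "X = x powr (2 * s)"
  define P where "P t = (\<Sum>k. c k * t ^ k)" for t :: real
  define M where "M = (\<Sum>k. \<bar>c k\<bar> * X ^ k)"
  define g where "g u = J0 u * P (u powr (2 * s))" for u :: real
  have X0: "X \<ge> 0" by (simp add: X_def)
  have sumM: "summable (\<lambda>k. \<bar>c k\<bar> * X ^ k)" using AS_abs[OF c X0] .
  have hasJ: "(J k has_integral I k) {0..x}" for k
  proof -
    have "0 \<le> 2 * s * real k" using s by simp
    then have "q + 2 * s * real k > -2" using q by linarith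
    from beta_kernel[OF x b this] show ?thesis by (simp add: J_def[abs_def] I_def)
  qed
  have hasJ0: "(J0 has_integral x powr (2*\<beta> + q) * Beta (q/2+1) \<beta>) {0..x}"
    using beta_kernel[OF x b q] by (simp add: J0_def[abs_def])
  have J0nn: "J0 u \<ge> 0" if "u \<ge> 0" for u
    using that by (simp add: J0_def)
  have JJ0: "J k u = J0 u * (u powr (2 * s)) ^ k" if "u \<ge> 0" for k u
  proof (cases "u = 0")
    case True then show ?thesis by (simp add: J_def J0_def)
  next
    case False
    with that have u: "u > 0" by simp
    have "u powr (q + 2 * s * real k) = u powr q * (u powr (2 * s)) ^ k"
      using u by (simp add: powr_add powr_realpow[symmetric] powr_powr mult.commute)
    then show ?thesis by (simp add: J_def J0_def)
  qed
  define fN where "fN N u = (\<Sum>k<N. c k * J k u)" for N u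
  have hasfN: "(fN N has_integral (\<Sum>k<N. c k * I k)) {0..x}" for N
    unfolding fN_def[abs_def]
    by (intro has_integral_sum) (auto intro: has_integral_mult_right hasJ)
  have h_int: "(\<lambda>u. M * J0 u) integrable_on {0..x}"
    using has_integral_mult_right[OF hasJ0, of M] by (auto simp: integrable_on_def)
  have bound: "norm (fN N u) \<le> M * J0 u" if u: "u \<in> {0..x}" for N u
  proof -
    have u0: "u \<ge> 0" "u \<le> x" using u by auto
    have pu: "u powr (2 * s) \<le> X" unfolding X_def using u0 s by (intro powr_mono2) auto
    have "norm (fN N u) \<le> (\<Sum>k<N. \<bar>c k * J k u\<bar>)"
      unfolding fN_def by (simp add: sum_abs)
    also have "\<dots> = (\<Sum>k<N. \<bar>c k\<bar> * (u powr (2 * s)) ^ k) * J0 u"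
      by (simp add: JJ0[OF u0(1)] sum_distrib_right sum_distrib_left abs_mult J0nn[OF u0(1)] mult_ac)
    also have "\<dots> \<le> (\<Sum>k<N. \<bar>c k\<bar> * X ^ k) * J0 u"
      by (intro mult_right_mono sum_mono mult_left_mono power_mono pu J0nn u0) auto
    also have "\<dots> \<le> M * J0 u"
      unfolding M_def by (intro mult_right_mono sum_le_suminf sumM J0nn u0) (auto simp: X0)
    finally show ?thesis .
  qed
  have conv: "(\<lambda>N. fN N u) \<longlonglongrightarrow> g u" if u: "u \<in> {0..x}" for u
  proof -
    have u0: "u \<ge> 0" using u by auto
    have "(\<lambda>k. c k * (u powr (2 * s)) ^ k) sums P (u powr (2 * s))"
      using c unfolding AS_def P_def by (simp add: summable_sums)
    then have "(\<lambda>k. c k * (u powr (2 * s)) ^ k * J0 u) sums (P (u powr (2 * s)) * J0 u)"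
      by (rule sums_mult2)
    then show ?thesis
      unfolding sums_def fN_def g_def by (simp add: JJ0[OF u0] mult_ac)
  qed
  have fint: "fN N integrable_on {0..x}" for N using hasfN by (auto simp: integrable_on_def)
  have lim0: "(\<lambda>N. integral {0..x} (fN N)) \<longlonglongrightarrow> integral {0..x} g"
    by (rule dominated_convergence(2)[OF fint h_int bound conv])
  have "integral {0..x} (fN N) = (\<Sum>k<N. c k * I k)" for N using hasfN by (rule integral_unique)
  with lim0 have lim: "(\<lambda>N. \<Sum>k<N. c k * I k) \<longlonglongrightarrow> integral {0..x} g" by simp
  then have sums1: "(\<lambda>k. c k * I k) sums integral {0..x} g" by (simp add: sums_def)
  have intg: "integral {0..x} (\<lambda>u. (x powr 2 - u powr 2) powr (\<beta> - 1) * u powr (2 * 0) * f u * (2 * u powr (2 - 1)))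
      = integral {0..x} g"
  proof (rule integral_spike[of "{0}"])
    fix u assume "u \<in> {0..x} - {0}"
    then have u: "u > 0" by auto
    have "f u = u powr q * P (u powr (2 * s))"
    proof -
      have "(\<lambda>k. c k * (u powr (2 * s)) ^ k) sums P (u powr (2 * s))"
        using c unfolding AS_def P_def by (simp add: summable_sums)
      then have "(\<lambda>k. u powr q * (c k * (u powr (2 * s)) ^ k)) sums (u powr q * P (u powr (2 * s)))"
        by (rule sums_mult)
      moreover have "u powr q * (c k * (u powr (2 * s)) ^ k) = c k * u powr (q + 2 * s * real k)" for k
        using u by (simp add: powr_add powr_realpow[symmetric] powr_powr mult.commute mult.left_commute)
      ultimately show ?thesis using H[OF u] sums_unique2 by auto
    qed
    then show "g u = (x powr 2 - u powr 2) powr (\<beta> - 1) * u powr (2 * 0) * f u * (2 * u powr (2 - 1))"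
      using u by (simp add: g_def J0_def mult_ac)
  qed auto
  have "EK_pos 2 0 \<beta> f x = x powr (- 2 * \<beta>) / Gamma \<beta> * integral {0..x} g"
    unfolding EK_pos_def intg by simp
  moreover have "(\<lambda>k. c k * I k * (x powr (- 2 * \<beta>) / Gamma \<beta>)) sums (integral {0..x} g * (x powr (- 2 * \<beta>) / Gamma \<beta>))"
    by (rule sums_mult2[OF sums1])
  moreover have "c k * I k * (x powr (- 2 * \<beta>) / Gamma \<beta>) =
      c k * Gamma (1 + q/2 + s * real k) * rGamma (1 + \<beta> + q/2 + s * real k) * x powr (q + 2 * s * real k)" for k
  proof -
    have G0: "Gamma \<beta> \<noteq> 0" using Gamma_real_pos[OF b] by simp
    have e: "(q + 2 * s * real k)/2 + 1 = 1 + q/2 + s * real k" by (simp add: field_simps)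
    have e2: "1 + q / 2 + s * real k + \<beta> = 1 + \<beta> + q/2 + s * real k" by simp
    have xx: "x powr (2*\<beta> + (q + 2 * s * real k)) * x powr (- 2 * \<beta>) = x powr (q + 2 * s * real k)"
      by (simp add: powr_add[symmetric])
    show ?thesis
      unfolding I_def e Beta_def e2 rGamma_inverse_Gamma
      using G0 xx by (simp add: field_simps)
  qed
  ultimately show ?thesis by (simp add: mult.commute)
qed



lemma H_form:
  assumes c: "AS c" and u: "u > 0"
    and H: "(\<lambda>k. c k * u powr (q + 2 * s * real k)) sums fu"
  shows "fu = u powr q * (\<Sum>k. c k * (u powr (2 * s)) ^ k)"
proof -
  have "(\<lambda>k. c k * (u powr (2 * s)) ^ k) sums (\<Sum>k. c k * (u powr (2 * s)) ^ k)"
    using c unfolding AS_def by (simp add: summable_sums)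
  then have "(\<lambda>k. u powr q * (c k * (u powr (2 * s)) ^ k)) sums (u powr q * (\<Sum>k. c k * (u powr (2 * s)) ^ k))"
    by (rule sums_mult)
  moreover have "u powr q * (c k * (u powr (2 * s)) ^ k) = c k * u powr (q + 2 * s * real k)" for k
    using u by (simp add: powr_add powr_realpow[symmetric] powr_powr mult.commute mult.left_commute)
  ultimately show ?thesis using H sums_unique2 by auto
qed

lemma diffs_sums:
  assumes c: "AS c"
  shows "(\<lambda>k. real k * c k * t ^ k) sums (t * (\<Sum>n. diffs c n * t ^ n))"
proof -
  have "summable (\<lambda>n. diffs c n * t ^ n)"
    by (rule termdiff_converges_all) (use c in \<open>auto simp: AS_def\<close>)
  then have "(\<lambda>n. t * (diffs c n * t ^ n)) sums (t * (\<Sum>n. diffs c n * t ^ n))"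
    by (intro sums_mult summable_sums)
  moreover have "t * (diffs c n * t ^ n) = real (Suc n) * c (Suc n) * t ^ (Suc n)" for n
    by (simp add: diffs_def)
  ultimately have "(\<lambda>n. real (Suc n) * c (Suc n) * t ^ (Suc n)) sums (t * (\<Sum>n. diffs c n * t ^ n))"
    by simp
  then show ?thesis by (subst (asm) sums_Suc_iff) simp
qed

lemma AS_lin:
  assumes c: "AS c"
  shows "AS (\<lambda>k. c k * (q + 2 * s * real k))"
  unfolding AS_def
proof
  fix y :: real
  have 1: "summable (\<lambda>k. q * (c k * y ^ k))" using c by (simp add: AS_def summable_mult)
  have 2: "summable (\<lambda>k. 2 * s * (real k * c k * y ^ k))"
    using diffs_sums[OF c, of y] by (intro summable_mult) (auto simp: sums_iff)
  have "summable (\<lambda>k. q * (c k * y ^ k) + 2 * s * (real k * c k * y ^ k))"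
    by (rule summable_add[OF 1 2])
  then show "summable (\<lambda>k. c k * (q + 2 * s * real k) * y ^ k)"
    by (simp add: algebra_simps)
qed

lemma deriv_series:
  fixes s q :: real
  assumes s: "s > 0" and c: "AS c"
    and H: "\<And>u. u > 0 \<Longrightarrow> (\<lambda>k. c k * u powr (q + 2 * s * real k)) sums f u"
    and u: "u > 0"
  shows "(\<lambda>k. (c k * (q + 2 * s * real k)) * u powr (q + 2 * s * real k)) sums (u * deriv f u)"
proof -
  define P where "P t = (\<Sum>k. c k * t ^ k)" for t :: real
  define P' where "P' t = (\<Sum>n. diffs c n * t ^ n)" for t :: real
  define F where "F v = v powr q * P (v powr (2 * s))" for v :: real
  define t where "t = u powr (2 * s)"
  have fF: "f v = F v" if "v \<in> {0<..}" for v
    using H_form[OF c _ H] that by (simp add: F_def P_def)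
  have dP: "(P has_field_derivative P' y) (at y)" for y
    unfolding P_def[abs_def] P'_def
    by (rule termdiffs_strong_converges_everywhere) (use c in \<open>auto simp: AS_def\<close>)
  have d1: "((\<lambda>v. v powr q) has_real_derivative q * u powr (q - 1)) (at u)"
    using DERIV_fun_powr[OF DERIV_ident, of u q] u by simp
  have d2: "((\<lambda>v. v powr (2 * s)) has_real_derivative (2 * s) * u powr (2 * s - 1)) (at u)"
    using DERIV_fun_powr[OF DERIV_ident, of u "2 * s"] u by simp
  have d3: "((\<lambda>v. P (v powr (2 * s))) has_real_derivative P' t * ((2 * s) * u powr (2 * s - 1))) (at u)"
    unfolding t_def by (rule DERIV_chain2[OF dP d2])
  have dF: "(F has_real_derivative
       (q * u powr (q - 1) * P t + P' t * ((2 * s) * u powr (2 * s - 1)) * u powr q)) (at u)"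
    unfolding F_def using DERIV_mult[OF d1 d3] by (simp add: t_def)
  have df: "(f has_real_derivative
       (q * u powr (q - 1) * P t + P' t * ((2 * s) * u powr (2 * s - 1)) * u powr q)) (at u)"
    by (rule has_field_derivative_transform_within_open[OF dF, of "{0<..}"]) (use u fF in auto)
  have e1: "u * u powr (q - 1) = u powr q" using u by (simp add: powr_diff)
  have e2: "u * u powr (2 * s - 1) = t" using u by (simp add: powr_diff t_def)
  have "u * deriv f u = u * (q * u powr (q - 1) * P t + P' t * ((2 * s) * u powr (2 * s - 1)) * u powr q)"
    using DERIV_imp_deriv[OF df] by simp
  also have "\<dots> = q * P t * (u * u powr (q - 1)) + 2 * s * P' t * u powr q * (u * u powr (2 * s - 1))"
    by (simp add: algebra_simps)
  also have "\<dots> = u powr q * (q * P t + 2 * s * (t * P' t))"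
    unfolding e1 e2 by (simp add: algebra_simps)
  finally have eq: "u * deriv f u = u powr q * (q * P t + 2 * s * (t * P' t))" .
  have s1: "(\<lambda>k. q * (c k * t ^ k)) sums (q * P t)"
    using c unfolding AS_def P_def by (intro sums_mult summable_sums) auto
  have s2: "(\<lambda>k. 2 * s * (real k * c k * t ^ k)) sums (2 * s * (t * P' t))"
    unfolding P'_def by (intro sums_mult diffs_sums c)
  have "(\<lambda>k. u powr q * (q * (c k * t ^ k) + 2 * s * (real k * c k * t ^ k))) sums (u * deriv f u)"
    unfolding eq by (intro sums_mult sums_add s1 s2)
  moreover have "u powr q * (q * (c k * t ^ k) + 2 * s * (real k * c k * t ^ k)) =
     (c k * (q + 2 * s * real k)) * u powr (q + 2 * s * real k)" for k
  proof -
    have "u powr (q + 2 * s * real k) = u powr q * t ^ k"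
      using u by (simp add: t_def powr_add powr_realpow[symmetric] powr_powr mult.commute)
    then show ?thesis by (simp add: algebra_simps)
  qed
  ultimately show ?thesis by simp
qed



lemma aux_comb:
  fixes b c G R X L :: real
  shows "(0 + b + 1) * (c * G * R * X) + 1 / 2 * ((c * L) * G * R * X) = (c * G * X) * (((b+1) + L/2) * R)"
  by (simp add: field_simps)

lemma EK_iter_series:
  fixes s q x :: real
  assumes s: "s > 0" and q: "q > -2" and x: "x > 0"
  shows "AS c \<Longrightarrow> \<beta> + real n > 0 \<Longrightarrow>
    (\<And>u. u > 0 \<Longrightarrow> (\<lambda>k. c k * u powr (q + 2 * s * real k)) sums f u) \<Longrightarrow>
    (\<lambda>k. c k * Gamma (1 + q/2 + s * real k) * rGamma (1 + \<beta> + q/2 + s * real k)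
              * x powr (q + 2 * s * real k)) sums EK_iter n 2 0 \<beta> f x"
proof (induction n arbitrary: \<beta> c f)
  case 0
  then show ?case using EK_pos_series[OF s _ q x, of \<beta> c f] by simp
next
  case (Suc n)
  have c': "AS (\<lambda>k. c k * (q + 2 * s * real k))" by (rule AS_lin[OF Suc.prems(1)])
  have b1: "(\<beta> + 1) + real n > 0" using Suc.prems(2) by simp
  have S1: "(\<lambda>k. c k * Gamma (1 + q/2 + s * real k) * rGamma (1 + (\<beta> + 1) + q/2 + s * real k)
              * x powr (q + 2 * s * real k)) sums EK_iter n 2 0 (\<beta> + 1) f x"
    by (rule Suc.IH[OF Suc.prems(1) b1 Suc.prems(3)])
  have S2: "(\<lambda>k. (c k * (q + 2 * s * real k)) * Gamma (1 + q/2 + s * real k) * rGamma (1 + (\<beta> + 1) + q/2 + s * real k)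
              * x powr (q + 2 * s * real k)) sums EK_iter n 2 0 (\<beta> + 1) (\<lambda>u. u * deriv f u) x"
    by (rule Suc.IH[OF c' b1 deriv_series[OF s Suc.prems(1) Suc.prems(3)]])
  have S: "(\<lambda>k. (0 + \<beta> + 1) * (c k * Gamma (1 + q/2 + s * real k) * rGamma (1 + (\<beta> + 1) + q/2 + s * real k)
              * x powr (q + 2 * s * real k)) + 1 / 2 * ((c k * (q + 2 * s * real k)) * Gamma (1 + q/2 + s * real k) * rGamma (1 + (\<beta> + 1) + q/2 + s * real k)
              * x powr (q + 2 * s * real k))) sums EK_iter (Suc n) 2 0 \<beta> f x"
    unfolding EK_iter.simps by (intro sums_add sums_mult S1 S2)
  moreover have "(0 + \<beta> + 1) * (c k * Gamma (1 + q/2 + s * real k) * rGamma (1 + (\<beta> + 1) + q/2 + s * real k)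
              * x powr (q + 2 * s * real k)) + 1 / 2 * ((c k * (q + 2 * s * real k)) * Gamma (1 + q/2 + s * real k) * rGamma (1 + (\<beta> + 1) + q/2 + s * real k)
              * x powr (q + 2 * s * real k)) = 
     c k * Gamma (1 + q/2 + s * real k) * rGamma (1 + \<beta> + q/2 + s * real k) * x powr (q + 2 * s * real k)" for k
  proof -
    define z where "z = 1 + \<beta> + q/2 + s * real k"
    have z1: "1 + (\<beta> + 1) + q/2 + s * real k = z + 1" by (simp add: z_def)
    have "(0 + \<beta> + 1) + (q + 2 * s * real k) / 2 = z" by (simp add: z_def field_simps)
    then have "(0 + \<beta> + 1) * (c k * Gamma (1 + q/2 + s * real k) * rGamma (z + 1)
              * x powr (q + 2 * s * real k)) + 1 / 2 * ((c k * (q + 2 * s * real k)) * Gamma (1 + q/2 + s * real k) * rGamma (z + 1)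
              * x powr (q + 2 * s * real k)) = (c k * Gamma (1 + q/2 + s * real k) * x powr (q + 2 * s * real k)) * (z * rGamma (z + 1))"
      unfolding aux_comb by simp
    then show ?thesis unfolding z1 rGamma_plus1 by (simp add: z_def mult_ac)
  qed
  ultimately show ?case by simp
qed



lemma pow_fact_le_exp:
  fixes T :: real assumes "T \<ge> 0"
  shows "T ^ n / fact n \<le> exp T"
proof -
  have s: "(\<lambda>n. T ^ n / fact n) sums exp T"
    using exp_converges[of T] by (simp add: divide_inverse mult.commute scaleR_conv_of_real)
  have "sum (\<lambda>n. T ^ n / fact n) {n} \<le> suminf (\<lambda>n. T ^ n / fact n)"
    by (rule sum_le_suminf) (use s assms in \<open>auto simp: sums_iff\<close>)
  then show ?thesis using s by (simp add: sums_iff)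
qed

lemma Gamma_ge_fact:
  fixes y :: real
  assumes y: "y \<ge> 3"
  shows "Gamma y \<ge> fact (nat \<lfloor>y\<rfloor> - 1)"
proof -
  define m where "m = nat \<lfloor>y\<rfloor>"
  have m3: "m \<ge> 3" using y unfolding m_def by linarith
  have my: "real m \<le> y" using y unfolding m_def by linarith
  have "Gamma (real m) = fact (m - 1)"
    using Gamma_fact[of "m - 1"] m3 by (simp add: of_nat_diff)
  moreover have "Gamma (real m) \<le> Gamma y"
  proof (cases "real m = y")
    case True then show ?thesis by simp
  next
    case False
    then have "real m < y" using my by simp
    then show ?thesis using m3 by (intro less_imp_le Gamma_real_strict_mono) auto
  qed
  ultimately show ?thesis by (simp add: m_def)
qed

lemma rGamma_decay:
  fixes \<alpha> R :: real
  assumes a: "\<alpha> > 0" and R: "R \<ge> 0"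
  shows "summable (\<lambda>k. rGamma (\<alpha> + \<alpha> * real k) * R ^ k)"
proof -
  define T where "T = (2*R+2) powr (1/\<alpha>)"
  have T1: "T \<ge> 1" unfolding T_def using a R by (intro ge_one_powr_ge_zero) auto
  have Ta: "T powr \<alpha> = 2*R+2" unfolding T_def using a R by (simp add: powr_powr)
  define r where "r = R / (2*R+2)"
  have r: "0 \<le> r" "r < 1" unfolding r_def using R by auto
  define C where "C = exp T * T^2"
  define N where "N = nat \<lceil>3/\<alpha>\<rceil>"
  have bound: "norm (rGamma (\<alpha> + \<alpha> * real k) * R ^ k) \<le> C * r ^ k" if k: "k \<ge> N" for k
  proof -
    define y where "y = \<alpha> + \<alpha> * real k"
    have "real k \<ge> 3/\<alpha>" using k unfolding N_def by linarith
    then have ak: "\<alpha> * real k \<ge> 3" using a by (simp add: field_simps)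
    then have y3: "y \<ge> 3" unfolding y_def using a by linarith
    define m where "m = nat \<lfloor>y\<rfloor> - 1"
    have mge: "real m \<ge> \<alpha> * real k - 2" unfolding m_def y_def using y3 a
      by (simp add: y_def of_nat_diff) linarith
    have Gy: "Gamma y \<ge> fact m" unfolding m_def by (rule Gamma_ge_fact[OF y3])
    have Gpos: "Gamma y > 0" using y3 by simp
    have rg: "rGamma y = 1 / Gamma y" by (simp add: rGamma_inverse_Gamma divide_inverse)
    have "rGamma y \<le> 1 / fact m" unfolding rg using Gy Gpos by (simp add: frac_le)
    also have "\<dots> \<le> exp T / T ^ m"
      using pow_fact_le_exp[of T m] T1 by (simp add: field_simps)
    also have "T ^ m \<ge> T powr (\<alpha> * real k - 2)"
    proof -
      have "T powr (\<alpha> * real k - 2) \<le> T powr (real m)" by (rule powr_mono[OF mge T1])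
      then show ?thesis using T1 by (simp add: powr_realpow)
    qed
    then have "exp T / T ^ m \<le> exp T / T powr (\<alpha> * real k - 2)"
      using T1 by (intro divide_left_mono) auto
    also have "T powr (\<alpha> * real k - 2) = (2*R+2) ^ k / T^2"
    proof -
      have "T powr (\<alpha> * real k - 2) = T powr (\<alpha> * real k) / T powr 2" by (simp add: powr_diff)
      also have "T powr (\<alpha> * real k) = (T powr \<alpha>) ^ k"
        using T1 by (simp add: powr_power mult.commute)
      also have "T powr 2 = T^2" using T1 by (simp add: powr_numeral)
      finally show ?thesis by (simp add: Ta)
    qed
    finally have le: "rGamma y \<le> exp T / ((2*R+2) ^ k / T^2)" .
    have rnn: "rGamma y \<ge> 0" unfolding rg using Gpos by simp
    have "norm (rGamma y * R ^ k) = rGamma y * R ^ k" using rnn R by simp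
    also have "\<dots> \<le> exp T / ((2*R+2) ^ k / T^2) * R ^ k"
      using le R by (intro mult_right_mono) auto
    also have "\<dots> = C * r ^ k" unfolding C_def r_def using R
      by (simp add: power_divide field_simps)
    finally show ?thesis by (simp add: y_def)
  qed
  show ?thesis
    by (rule summable_comparison_test'[OF _ bound]) (use r in \<open>auto intro!: summable_mult summable_geometric\<close>)
qed



lemma rGamma_le1:
  fixes y :: real assumes "y \<ge> 2"
  shows "0 \<le> rGamma y" "rGamma y \<le> 1"
proof -
  have "Gamma y \<ge> 1"
  proof (cases "y = 2")
    case True then show ?thesis by (simp add: Gamma_numeral)
  next
    case False
    then have "Gamma 2 < Gamma y" using assms by (intro Gamma_real_strict_mono) auto
    then show ?thesis by (simp add: Gamma_numeral)
  qed
  then show "0 \<le> rGamma y" "rGamma y \<le> 1" by (auto simp: rGamma_inverse_Gamma inverse_le_1_iff)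
qed

lemma AS_from_decay:
  fixes \<alpha> B :: real and d :: "nat \<Rightarrow> real"
  assumes a: "\<alpha> > 0"
    and d: "\<And>k. \<alpha> * real k \<ge> 2 \<Longrightarrow> \<bar>d k\<bar> \<le> rGamma (\<alpha> + \<alpha> * real k) * B ^ k"
    and B: "B \<ge> 0"
  shows "AS d"
  unfolding AS_def
proof
  fix y :: real
  define N where "N = nat \<lceil>2/\<alpha>\<rceil>"
  have "summable (\<lambda>k. rGamma (\<alpha> + \<alpha> * real k) * (B * \<bar>y\<bar>) ^ k)"
    by (rule rGamma_decay[OF a]) (use B in auto)
  then show "summable (\<lambda>k. d k * y ^ k)"
  proof (rule summable_comparison_test'[where N=N])
    fix k assume k: "N \<le> k"
    have "real k \<ge> 2/\<alpha>" using k unfolding N_def by linarith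
    then have ak: "\<alpha> * real k \<ge> 2" using a by (simp add: field_simps)
    have "norm (d k * y ^ k) = \<bar>d k\<bar> * \<bar>y\<bar> ^ k" by (simp add: abs_mult power_abs)
    also have "\<dots> \<le> rGamma (\<alpha> + \<alpha> * real k) * B ^ k * \<bar>y\<bar> ^ k"
      by (intro mult_right_mono d ak) auto
    finally show "norm (d k * y ^ k) \<le> rGamma (\<alpha> + \<alpha> * real k) * (B * \<bar>y\<bar>) ^ k"
      by (simp add: power_mult_distrib mult_ac)
  qed
qed

theorem theorem3p1:
  fixes \<alpha> lam c :: real and u :: "real \<Rightarrow> real"
  assumes "0 < \<alpha>" and "\<alpha> \<le> 1" and "0 < c"
    and "\<And>w. 0 < w \<Longrightarrow> u w = w powr (2 * \<alpha> - 2) *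
          (\<Sum>k. (-1) ^ k * (lam / (2 powr \<alpha> * c powr \<alpha>)) ^ (2 * k)
                * w powr (2 * \<alpha> * real k) / (Gamma (\<alpha> * real k + \<alpha>))\<^sup>2)"
  shows "\<forall>w>0. LB_frac \<alpha> u w = - (lam\<^sup>2 / c powr (2 * \<alpha>)) * u w"
proof (intro allI impI)
  fix w :: real assume w: "w > 0"
  note a = assms(1)
  define A where "A = lam / (2 powr \<alpha> * c powr \<alpha>)"
  define q where "q = 2 * \<alpha> - 2"
  define N where "N = nat \<lfloor>\<alpha>\<rfloor> + 1"
  define c0 where "c0 k = (-1) ^ k * A ^ (2 * k) * rGamma (\<alpha> + \<alpha> * real k) ^ 2" for k
  define c1 where "c1 k = c0 k * Gamma (1 + q/2 + \<alpha> * real k) * rGamma (1 + - \<alpha> + q/2 + \<alpha> * real k)" for k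
  define g where "g = EK 2 0 (- \<alpha>) u"
  have q: "q > -2" using a by (simp add: q_def)
  have Nb: "- \<alpha> + real N > 0" unfolding N_def using a by linarith
  have EKeq: "EK 2 0 (- \<alpha>) f = EK_iter N 2 0 (- \<alpha>) f" for f
    using a by (simp add: EK_def N_def)
  have g1: "1 + q/2 + \<alpha> * real k = \<alpha> + \<alpha> * real k" for k by (simp add: q_def field_simps)
  have g2: "1 + - \<alpha> + q/2 + \<alpha> * real k = \<alpha> * real k" for k by (simp add: q_def field_simps)
  have GR: "Gamma (\<alpha> + \<alpha> * real k) * rGamma (\<alpha> + \<alpha> * real k) = 1" for k
  proof -
    have "Gamma (\<alpha> + \<alpha> * real k) > 0" using a by (intro Gamma_real_pos) (simp add: add_pos_nonneg)
    then show ?thesis by (simp add: rGamma_inverse_Gamma)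
  qed
  have c1e: "c1 k = (-1) ^ k * A ^ (2 * k) * rGamma (\<alpha> + \<alpha> * real k) * rGamma (\<alpha> * real k)" for k
  proof -
    have "c1 k = (-1) ^ k * A ^ (2 * k) * rGamma (\<alpha> + \<alpha> * real k) * rGamma (\<alpha> * real k)
       * (Gamma (\<alpha> + \<alpha> * real k) * rGamma (\<alpha> + \<alpha> * real k))"
      unfolding c1_def c0_def g1 g2 by (simp add: power2_eq_square mult_ac)
    then show ?thesis by (simp add: GR)
  qed
  have AS0: "AS c0"
  proof (rule AS_from_decay[OF a _ zero_le_power2[of A]])
    fix k assume k: "\<alpha> * real k \<ge> 2"
    have r: "0 \<le> rGamma (\<alpha> + \<alpha> * real k)" "rGamma (\<alpha> + \<alpha> * real k) \<le> 1"
      using rGamma_le1[of "\<alpha> + \<alpha> * real k"] k a by auto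
    have "\<bar>c0 k\<bar> = rGamma (\<alpha> + \<alpha> * real k) * rGamma (\<alpha> + \<alpha> * real k) * (A^2) ^ k"
      unfolding c0_def using r by (simp add: abs_mult power_abs power_mult power2_eq_square)
    also have "\<dots> \<le> rGamma (\<alpha> + \<alpha> * real k) * 1 * (A^2) ^ k"
      using r by (intro mult_right_mono mult_left_mono) auto
    finally show "\<bar>c0 k\<bar> \<le> rGamma (\<alpha> + \<alpha> * real k) * (A\<^sup>2) ^ k" by simp
  qed
  have AS1: "AS c1"
  proof (rule AS_from_decay[OF a _ zero_le_power2[of A]])
    fix k assume k: "\<alpha> * real k \<ge> 2"
    have r: "0 \<le> rGamma (\<alpha> * real k)" "rGamma (\<alpha> * real k) \<le> 1"
      using rGamma_le1[of "\<alpha> * real k"] k by auto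
    have r0: "0 \<le> rGamma (\<alpha> + \<alpha> * real k)"
      using rGamma_le1[of "\<alpha> + \<alpha> * real k"] k a by auto
    have "\<bar>c1 k\<bar> = rGamma (\<alpha> + \<alpha> * real k) * rGamma (\<alpha> * real k) * (A^2) ^ k"
      unfolding c1e using r r0 by (simp add: abs_mult power_abs power_mult)
    also have "\<dots> \<le> rGamma (\<alpha> + \<alpha> * real k) * 1 * (A^2) ^ k"
      using r r0 by (intro mult_right_mono mult_left_mono) auto
    finally show "\<bar>c1 k\<bar> \<le> rGamma (\<alpha> + \<alpha> * real k) * (A\<^sup>2) ^ k" by simp
  qed
  have Hu: "(\<lambda>k. c0 k * x powr (q + 2 * \<alpha> * real k)) sums u x" if x: "x > 0" for x
  proof -
    have t: "(-1) ^ k * A ^ (2 * k) * x powr (2 * \<alpha> * real k) / (Gamma (\<alpha> * real k + \<alpha>))\<^sup>2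
        = c0 k * (x powr (2 * \<alpha>)) ^ k" for k
    proof -
      have "x powr (2 * \<alpha> * real k) = (x powr (2 * \<alpha>)) ^ k"
        using x by (simp add: powr_power mult_ac)
      then show ?thesis unfolding c0_def
        by (simp add: rGamma_inverse_Gamma add.commute power_inverse divide_inverse)
    qed
    have "(\<lambda>k. c0 k * (x powr (2 * \<alpha>)) ^ k) sums (\<Sum>k. c0 k * (x powr (2 * \<alpha>)) ^ k)"
      using AS0 by (simp add: AS_def summable_sums)
    then have "(\<lambda>k. x powr q * (c0 k * (x powr (2 * \<alpha>)) ^ k)) sums u x"
      using assms(4)[OF x] unfolding t A_def[symmetric] q_def[symmetric] by (metis sums_mult)
    moreover have "x powr q * (c0 k * (x powr (2 * \<alpha>)) ^ k) = c0 k * x powr (q + 2 * \<alpha> * real k)" for k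
      using x by (simp add: powr_add powr_power mult_ac)
    ultimately show ?thesis by simp
  qed
  have Hg: "(\<lambda>k. c1 k * x powr (q + 2 * \<alpha> * real k)) sums g x" if x: "x > 0" for x
    using EK_iter_series[OF a q x AS0 Nb Hu] unfolding g_def EKeq c1_def .
  have S2: "(\<lambda>k. c1 k * Gamma (1 + q/2 + \<alpha> * real k) * rGamma (1 + - \<alpha> + q/2 + \<alpha> * real k)
         * w powr (q + 2 * \<alpha> * real k)) sums EK 2 0 (- \<alpha>) g w"
    using EK_iter_series[OF a q w AS1 Nb Hg] unfolding EKeq .
  define E where "E = EK 2 0 (- \<alpha>) g w"
  define t where "t k = c1 k * Gamma (1 + q/2 + \<alpha> * real k) * rGamma (1 + - \<alpha> + q/2 + \<alpha> * real k)
         * w powr (q + 2 * \<alpha> * real k)" for k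
  have te: "t k = (-1) ^ k * A ^ (2 * k) * rGamma (\<alpha> * real k) ^ 2 * w powr (q + 2 * \<alpha> * real k)" for k
  proof -
    have "t k = (-1) ^ k * A ^ (2 * k) * rGamma (\<alpha> * real k) ^ 2 * w powr (q + 2 * \<alpha> * real k)
        * (Gamma (\<alpha> + \<alpha> * real k) * rGamma (\<alpha> + \<alpha> * real k))"
      unfolding t_def c1e g1 g2 by (simp add: power2_eq_square mult_ac)
    then show ?thesis by (simp add: GR)
  qed
  have t0: "t 0 = 0" unfolding te by simp
  have "t sums E" using S2 unfolding t_def[abs_def] E_def g_def .
  then have ts: "(\<lambda>k. t (Suc k)) sums E" by (subst sums_Suc_iff) (simp add: t0)
  have tS: "t (Suc k) = (- (A^2) * w powr (2 * \<alpha>)) * (c0 k * w powr (q + 2 * \<alpha> * real k))" for k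
  proof -
    have e1: "\<alpha> * real (Suc k) = \<alpha> + \<alpha> * real k" by (simp add: algebra_simps)
    have e2: "w powr (q + 2 * \<alpha> * real (Suc k)) = w powr (q + 2 * \<alpha> * real k) * w powr (2 * \<alpha>)"
      by (simp add: powr_add[symmetric] algebra_simps)
    show ?thesis unfolding te c0_def e1 e2 by (simp add: power_mult power2_eq_square mult_ac)
  qed
  have "(\<lambda>k. (- (A^2) * w powr (2 * \<alpha>)) * (c0 k * w powr (q + 2 * \<alpha> * real k))) sums
        ((- (A^2) * w powr (2 * \<alpha>)) * u w)"
    by (intro sums_mult Hu w)
  with ts have EE: "E = (- (A^2) * w powr (2 * \<alpha>)) * u w"
    unfolding tS by (simp add: sums_unique2)
  have p4: "4 powr \<alpha> = (2 powr \<alpha>)^2"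
  proof -
    have "(2 powr \<alpha>)^2 = (2::real) powr (2 * \<alpha>)" by (simp add: powr_power mult.commute)
    also have "\<dots> = ((2::real) powr 2) powr \<alpha>" by (simp only: powr_powr)
    also have "(2::real) powr 2 = 4" by simp
    finally show ?thesis by simp
  qed
  have pc: "c powr (2 * \<alpha>) = (c powr \<alpha>)^2" using assms(3) by (simp add: powr_power mult.commute)
  have ww: "w powr (- 2 * \<alpha>) * w powr (2 * \<alpha>) = 1" using w by (simp add: powr_add[symmetric])
  have "LB_frac \<alpha> u w = 4 powr \<alpha> * w powr (- 2 * \<alpha>) * E"
    unfolding LB_frac_def E_def g_def ..
  also have "\<dots> = - (4 powr \<alpha> * A^2) * (w powr (- 2 * \<alpha>) * w powr (2 * \<alpha>)) * u w"
    unfolding EE by (simp add: mult_ac)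
  also have "\<dots> = - (lam\<^sup>2 / c powr (2 * \<alpha>)) * u w"
    unfolding ww p4 pc A_def using assms(3) by (simp add: power_divide power_mult_distrib)
  finally show "LB_frac \<alpha> u w = - (lam\<^sup>2 / c powr (2 * \<alpha>)) * u w" .
qed

end
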